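(* Let $\Gamma$ be a $\mathbb{Z}^d$-periodic graph with generic dispersion polynomial $\Phi$ and let $\eta\in\mathbb{Z}^{d+1}$. Then $\eta$ exposes a vertical face of $\mathcal{N}(\Phi)$ if and only if the initial graph $\mathrm{in}_\eta\widehat{\Gamma}$ has a vertex $v$ carrying both loops, the one labeled $\lambda$ and the one labeled $-V(v)$. Moreover, such a vector $\eta$ is horizontal (its last coordinate is $0$).
   Context: A $\mathbb{Z}^d$-periodic graph $\Gamma$ is a simple undirected graph of bounded degree with a free $\mathbb{Z}^d$-action $(\alpha,v)\mapsto\alpha+v$ by automorphisms with finitely many vertex and edge orbits; $W$ is a set of vertex orbit representatives. With independent indeterminates $e$ (one per edge orbit) and $V(v)$ ($v\in W$), the generic Floquet matrix $H$ has $(v,u)$ entry $\delta_{v,u}V(v)-\sum_{\alpha: v\sim\alpha+u}e_{(v,\alpha+u)}z^\alpha$ and $\Phi=\det(\lambda I_W-H)$, viewed as a polynomial in $(z,\lambda)$ with coefficients in $\mathbb{C}[e,V]$; $\mathcal{N}(\Phi)\subset\mathbb{R}^{d+1}$ is the convex hull of its $(z,\lambda)$-exponent vectors. A vector $\eta$ exposes the face on which $x\mapsto\eta\cdot x$ is minimized; a face is vertical if it contains a segment parallel to $(0,\dots,0,1)$. The directed labeled multigraph $\widehat{\Gamma}$ has vertex set $W$, two loops at each $v$ labeled $\lambda$ and $-V(v)$, and for each $u,v\in W$, $\alpha\in\mathbb{Z}^d$ with $v\sim\alpha+u$ a directed edge $v\leftarrow u$ labeled $e_{(v,\alpha+u)}z^\alpha$.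 A cycle cover $\zeta$ is a set of edges such that each vertex is the tail of exactly one and the head of exactly one edge of $\zeta$; $\mathrm{wt}(\zeta)$ is the product of its labels and $\eta(\zeta)$ is $\eta$ applied to the $(z,\lambda)$-exponent of $\mathrm{wt}(\zeta)$. The initial graph $\mathrm{in}_\eta\widehat{\Gamma}$ is the subgraph on $W$ of those edges lying in some cycle cover $\zeta$ of $\widehat{\Gamma}$ with $\eta(\zeta)$ minimal among all cycle covers. *)

theory Defs
  imports "HOL-Analysis.Analysis" "HOL-Library.Poly_Mapping"
begin

text \<open>A Z^d-periodic graph is encoded (up to isomorphism) by a finite set W of vertex
orbit representatives and the finite set E of triples (v, a, u) with v in W, u in W,
a in Z^d such that v is adjacent to a+u.  The vertex set is Z^d x W, and
(b, v) ~ (c, u) iff (v, c - b, u) in E.  Symmetry, simplicity (no loops), bounded degree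
and finiteness of the orbits translate into the conditions below.  The dimension d is
the cardinality of the finite index type 'd.\<close>

type_synonym ('d, 'v) etriple = "'v \<times> (int ^ 'd) \<times> 'v"

definition periodic_graph :: "'v set \<Rightarrow> ('d::finite, 'v) etriple set \<Rightarrow> bool" where
  "periodic_graph W E \<longleftrightarrow> finite W \<and> finite E \<and>
     (\<forall>v a u. (v, a, u) \<in> E \<longrightarrow> v \<in> W \<and> u \<in> W) \<and>
     (\<forall>v a u. (v, a, u) \<in> E \<longrightarrow> (u, - a, v) \<in> E) \<and>
     (\<forall>v. (v, 0, v) \<notin> E)"

definition adj :: "('d::finite, 'v) etriple set \<Rightarrow> (int ^ 'd) \<times> 'v \<Rightarrow> (int ^ 'd) \<times> 'v \<Rightarrow> bool" where
  "adj E x y \<longleftrightarrow> (snd x, fst y - fst x, snd y) \<in> E"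

text \<open>The edge orbit of the edge {v, a+u}: it is represented by the two triples
describing it from either endpoint.\<close>

definition edge_orbit :: "('d::finite, 'v) etriple \<Rightarrow> ('d, 'v) etriple set" where
  "edge_orbit t = (case t of (v, a, u) \<Rightarrow> {(v, a, u), (u, - a, v)})"

datatype ('d, 'v) var = Zv 'd | Lam | Ev "('d, 'v) etriple set" | Vv 'v

type_synonym ('d, 'v) mono = "('d, 'v) var \<Rightarrow>\<^sub>0 int"
type_synonym ('d, 'v) lpoly = "('d, 'v) mono \<Rightarrow>\<^sub>0 complex"

definition var_mono :: "('d, 'v) var \<Rightarrow> ('d, 'v) mono" where
  "var_mono x = Poly_Mapping.single x 1"

definition z_mono :: "int ^ 'd \<Rightarrow> ('d::finite, 'v) mono" where
  "z_mono a = (\<Sum>i\<in>UNIV. Poly_Mapping.single (Zv i) (a $ i))"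

definition monomial :: "complex \<Rightarrow> ('d, 'v) mono \<Rightarrow> ('d, 'v) lpoly" where
  "monomial c m = Poly_Mapping.single m c"

definition floquet :: "('d::finite, 'v) etriple set \<Rightarrow> 'v \<Rightarrow> 'v \<Rightarrow> ('d, 'v) lpoly" where
  "floquet E v u =
     (if v = u then monomial 1 (var_mono (Vv v)) else 0)
     - (\<Sum>a\<in>{a. (v, a, u) \<in> E}. monomial 1 (var_mono (Ev (edge_orbit (v, a, u))) + z_mono a))"

definition char_mat :: "('d::finite, 'v) etriple set \<Rightarrow> 'v \<Rightarrow> 'v \<Rightarrow> ('d, 'v) lpoly" where
  "char_mat E v u = (if v = u then monomial 1 (var_mono Lam) else 0) - floquet E v u"

definition det_on :: "'v set \<Rightarrow> ('v \<Rightarrow> 'v \<Rightarrow> 'a::comm_ring_1) \<Rightarrow> 'a" where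
  "det_on W M = (\<Sum>p\<in>{p. p permutes W}. of_int (sign p) * (\<Prod>v\<in>W. M v (p v)))"

definition dispersion :: "'v set \<Rightarrow> ('d::finite, 'v) etriple set \<Rightarrow> ('d, 'v) lpoly" where
  "dispersion W E = det_on W (char_mat E)"

text \<open>(z, lambda)-exponent of a monomial, and the Newton polytope in R^(d+1)
of a polynomial viewed as a polynomial in (z, lambda) with coefficients in C[e, V].\<close>

definition zl_exp :: "('d::finite, 'v) mono \<Rightarrow> (int ^ 'd) \<times> int" where
  "zl_exp m = ((\<chi> i. Poly_Mapping.lookup m (Zv i)), Poly_Mapping.lookup m Lam)"

definition to_real :: "(int ^ 'd) \<times> int \<Rightarrow> (real ^ 'd::finite) \<times> real" where
  "to_real x = ((\<chi> i. real_of_int (fst x $ i)), real_of_int (snd x))"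

definition newton_polytope :: "('d::finite, 'v) lpoly \<Rightarrow> ((real ^ 'd) \<times> real) set" where
  "newton_polytope P = convex hull ((\<lambda>m. to_real (zl_exp m)) ` Poly_Mapping.keys P)"

definition exposed_face :: "(int ^ 'd::finite) \<times> int \<Rightarrow> ((real ^ 'd) \<times> real) set \<Rightarrow> ((real ^ 'd) \<times> real) set" where
  "exposed_face eta N = {x \<in> N. \<forall>y\<in>N. inner (to_real eta) x \<le> inner (to_real eta) y}"

definition vertical :: "((real ^ 'd::finite) \<times> real) set \<Rightarrow> bool" where
  "vertical F \<longleftrightarrow> (\<exists>x t. t \<noteq> 0 \<and> x \<in> F \<and> x + (0, t) \<in> F)"

definition exposes_vertical_face :: "(int ^ 'd::finite) \<times> int \<Rightarrow> ((real ^ 'd) \<times> real) set \<Rightarrow> bool" where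
  "exposes_vertical_face eta N \<longleftrightarrow> vertical (exposed_face eta N)"

text \<open>Edges: the loop labeled lambda at v, the loop labeled -V(v) at v, and for each
(v, a, u) in E the edge v <- u labeled e_(v,a+u) z^a (head v, tail u).\<close>

datatype ('d, 'v) hedge = LamLoop 'v | VLoop 'v | Edge 'v "int ^ 'd" 'v

fun head :: "('d::finite, 'v) hedge \<Rightarrow> 'v" where
  "head (LamLoop v) = v" | "head (VLoop v) = v" | "head (Edge v a u) = v"

fun tail :: "('d::finite, 'v) hedge \<Rightarrow> 'v" where
  "tail (LamLoop v) = v" | "tail (VLoop v) = v" | "tail (Edge v a u) = u"

definition hat_edges :: "'v set \<Rightarrow> ('d::finite, 'v) etriple set \<Rightarrow> ('d, 'v) hedge set" where
  "hat_edges W E = LamLoop ` W \<union> VLoop ` W \<union> {Edge v a u | v a u. (v, a, u) \<in> E}"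

fun label_coeff :: "('d::finite, 'v) hedge \<Rightarrow> complex" where
  "label_coeff (LamLoop v) = 1" | "label_coeff (VLoop v) = -1" | "label_coeff (Edge v a u) = 1"

fun label_mono :: "('d::finite, 'v) hedge \<Rightarrow> ('d, 'v) mono" where
  "label_mono (LamLoop v) = var_mono Lam"
| "label_mono (VLoop v) = var_mono (Vv v)"
| "label_mono (Edge v a u) = var_mono (Ev (edge_orbit (v, a, u))) + z_mono a"

definition label :: "('d::finite, 'v) hedge \<Rightarrow> ('d, 'v) lpoly" where
  "label x = monomial (label_coeff x) (label_mono x)"

definition cycle_cover :: "'v set \<Rightarrow> ('d::finite, 'v) etriple set \<Rightarrow> ('d, 'v) hedge set \<Rightarrow> bool" where
  "cycle_cover W E Z \<longleftrightarrow> Z \<subseteq> hat_edges W E \<and>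
     (\<forall>v\<in>W. \<exists>!x. x \<in> Z \<and> tail x = v) \<and> (\<forall>v\<in>W. \<exists>!x. x \<in> Z \<and> head x = v)"

definition wt :: "('d::finite, 'v) hedge set \<Rightarrow> ('d, 'v) lpoly" where
  "wt Z = (\<Prod>x\<in>Z. label x)"

definition wt_zl_exp :: "('d::finite, 'v) hedge set \<Rightarrow> (int ^ 'd) \<times> int" where
  "wt_zl_exp Z = zl_exp (\<Sum>x\<in>Z. label_mono x)"

definition int_dot :: "(int ^ 'd::finite) \<times> int \<Rightarrow> (int ^ 'd) \<times> int \<Rightarrow> int" where
  "int_dot eta x = (\<Sum>i\<in>UNIV. fst eta $ i * fst x $ i) + snd eta * snd x"

definition eta_val :: "(int ^ 'd::finite) \<times> int \<Rightarrow> ('d, 'v) hedge set \<Rightarrow> int" where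
  "eta_val eta Z = int_dot eta (wt_zl_exp Z)"

definition initial_graph :: "'v set \<Rightarrow> ('d::finite, 'v) etriple set \<Rightarrow> (int ^ 'd) \<times> int \<Rightarrow> ('d, 'v) hedge set" where
  "initial_graph W E eta = {x \<in> hat_edges W E. \<exists>Z. cycle_cover W E Z \<and> x \<in> Z \<and>
      (\<forall>Z'. cycle_cover W E Z' \<longrightarrow> eta_val eta Z \<le> eta_val eta Z')}"

end

theory Submission
  imports Defs "HOL-Combinatorics.Permutations"
begin


lemma R_fact1:
  assumes G1: "\<forall>v\<in>W. \<exists>w\<in>W. {v, q v} = {w, p w}" and v: "v \<in> W" "q v \<noteq> p v"
  shows "p (q v) = v"
proof -
  obtain w where w: "w \<in> W" "{v, q v} = {w, p w}" using G1 v by blast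
  show ?thesis
  proof (cases "w = v")
    case True then show ?thesis using w v by (auto simp: doubleton_eq_iff)
  next
    case False then show ?thesis using w v by (auto simp: doubleton_eq_iff)
  qed
qed

lemma R_inv:
  assumes G1: "\<forall>v\<in>W. \<exists>w\<in>W. {v, q v} = {w, p w}"
    and G2: "\<forall>v\<in>W. \<exists>w\<in>W. {v, p v} = {w, q w}"
    and p: "p permutes W" and v: "v \<in> W" "q v \<noteq> p v"
  shows "p v \<in> W \<and> q (p v) \<noteq> p (p v) \<and> q (p v) = v \<and> p (q v) = v"
proof -
  have a: "p (q v) = v" using R_fact1[OF G1 v] .
  have b: "q (p v) = v" using R_fact1[of W p q, OF G2 v(1)] v(2) by metis
  have c: "p (p v) \<noteq> v"
  proof
    assume "p (p v) = v"
    then have "p (p v) = p (q v)" using a by simp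
    then have "p v = q v" using permutes_inj[OF p] by (simp add: inj_eq)
    then show False using v by simp
  qed
  have "p v \<in> W" using p v(1) by (simp add: permutes_in_image)
  then show ?thesis using a b c by simp
qed

lemma sign_graph:
  assumes fin: "finite W" and p: "p permutes W" and q: "q permutes W"
    and G1: "\<forall>v\<in>W. \<exists>w\<in>W. {v, q v} = {w, p w}"
    and G2: "\<forall>v\<in>W. \<exists>w\<in>W. {v, p v} = {w, q w}"
  shows "sign p = sign q"
proof -
  define R where "R = {v\<in>W. q v \<noteq> p v}"
  have Rp: "p v \<in> R \<and> q (p v) = v \<and> p (q v) = v" if "v \<in> R" for v
  proof -
    have "v \<in> W" "q v \<noteq> p v" using that by (auto simp: R_def)
    from R_inv[OF G1 G2 p this] show ?thesis unfolding R_def by blast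
  qed
  have Rq: "q v \<in> R" if "v \<in> R" for v
  proof -
    have "v \<in> W" "p v \<noteq> q v" using that by (auto simp: R_def)
    from R_inv[OF G2 G1 q this] show ?thesis unfolding R_def by auto
  qed
  have RW: "R \<subseteq> W" unfolding R_def by auto
  have finR: "finite R" using fin RW finite_subset by blast
  have pR: "p ` R = R"
  proof -
    have sub: "p ` R \<subseteq> R" using Rp by blast
    have "card (p ` R) = card R" using card_image permutes_inj_on[OF p] by blast
    then show ?thesis using card_subset_eq[OF finR sub] by blast
  qed
  have pnR: "\<And>x. x \<notin> R \<Longrightarrow> p x \<notin> R"
  proof
    fix x assume x: "x \<notin> R" "p x \<in> R"
    then obtain y where "y \<in> R" "p x = p y" using pR by (metis imageE)
    then have "x = y" using permutes_inj[OF p] by (simp add: inj_eq)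
    then show False using x \<open>y \<in> R\<close> by simp
  qed
  have qnR: "q x = p x" if "x \<notin> R" for x
  proof (cases "x \<in> W")
    case True then show ?thesis using that unfolding R_def by blast
  next
    case False then show ?thesis using p q by (simp add: permutes_not_in)
  qed
  define p1 where "p1 = (\<lambda>x. if x \<in> R then p x else x)"
  define p1i where "p1i = (\<lambda>x. if x \<in> R then q x else x)"
  define p2 where "p2 = (\<lambda>x. if x \<in> R then x else p x)"
  have e1: "p1 \<circ> p1i = id" unfolding p1_def p1i_def using Rp Rq by (auto simp: fun_eq_iff)
  have e2: "p1i \<circ> p1 = id" unfolding p1_def p1i_def using Rp by (auto simp: fun_eq_iff)
  have bij1: "bij p1" using e1 e2 o_bij by blast
  have bij1i: "bij p1i" using e1 e2 o_bij by blast
  have perm1: "permutation p1"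
    by (rule permutation_lemma[OF finR bij1]) (auto simp: p1_def)
  have perm1i: "permutation p1i"
    by (rule permutation_lemma[OF finR bij1i]) (auto simp: p1i_def)
  have pp: "permutation p" using p fin permutation_permutes by blast
  have e3: "p2 = p1i \<circ> p" unfolding p2_def p1i_def using Rp pnR by (auto simp: fun_eq_iff)
  have perm2: "permutation p2" using e3 perm1i pp permutation_compose by auto
  have e4: "p = p1 \<circ> p2" unfolding p1_def p2_def using pnR by (auto simp: fun_eq_iff)
  have e5: "q = p1i \<circ> p2" unfolding p1i_def p2_def using pnR qnR by (auto simp: fun_eq_iff)
  have s1: "sign p1 * sign p1i = 1"
    using sign_compose[OF perm1 perm1i] e1 by simp
  have s2: "sign p1i = sign p1" using s1 by (cases "sign p1 = 1") (auto simp: sign_def split: if_splits)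
  show ?thesis using e4 e5 sign_compose perm1 perm1i perm2 s2 by metis
qed


lemma hat_edges_finite:
  assumes "periodic_graph W E" shows "finite (hat_edges W E)"
proof -
  have "{Edge v a u | v a u. (v, a, u) \<in> E} = (\<lambda>(v,a,u). Edge v a u) ` E" by force
  then show ?thesis using assms unfolding periodic_graph_def hat_edges_def by auto
qed

lemma hat_edges_W:
  assumes "periodic_graph W E" "x \<in> hat_edges W E" shows "head x \<in> W" "tail x \<in> W"
  using assms unfolding periodic_graph_def hat_edges_def by auto

definition HS :: "'v set \<Rightarrow> ('d::finite, 'v) etriple set \<Rightarrow> 'v \<Rightarrow> 'v \<Rightarrow> ('d, 'v) hedge set" where
  "HS W E v u = {x \<in> hat_edges W E. head x = v \<and> tail x = u}"

lemma HS_finite: assumes "periodic_graph W E" shows "finite (HS W E v u)"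
  using hat_edges_finite[OF assms] unfolding HS_def by auto

lemma monomial_neg: "monomial (-1) m = - monomial 1 m"
  by (simp add: monomial_def single_uminus)

lemma char_mat_sum:
  fixes E :: "('d::finite, 'v) etriple set"
  assumes pg: "periodic_graph W E" and v: "v \<in> W" and u: "u \<in> W"
  shows "char_mat E v u = (\<Sum>x\<in>HS W E v u. label x)"
proof -
  define A where "A = {a. (v, a, u) \<in> E}"
  have finA: "finite A"
  proof -
    have "A \<subseteq> (\<lambda>t. fst (snd t)) ` E" unfolding A_def by force
    then show ?thesis using pg finite_subset unfolding periodic_graph_def by blast
  qed
  define L where "L = (if v = u then {LamLoop v, VLoop v} else ({} :: ('d, 'v) hedge set))"
  have HSeq: "HS W E v u = L \<union> (\<lambda>a. Edge v a u) ` A"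
    using v u unfolding HS_def hat_edges_def L_def A_def by auto
  have disj: "L \<inter> (\<lambda>a. Edge v a u) ` A = {}" unfolding L_def by auto
  have finL: "finite L" unfolding L_def by auto
  have "(\<Sum>x\<in>HS W E v u. label x) = (\<Sum>x\<in>L. label x) + (\<Sum>x\<in>(\<lambda>a. Edge v a u) ` A. label x)"
    unfolding HSeq using sum.union_disjoint[OF finL _ disj] finA by blast
  also have "(\<Sum>x\<in>(\<lambda>a. Edge v a u) ` A. label x) = (\<Sum>a\<in>A. label (Edge v a u))"
    by (subst sum.reindex) (auto simp: inj_on_def)
  also have "\<dots> = (\<Sum>a\<in>A. monomial 1 (var_mono (Ev (edge_orbit (v, a, u))) + z_mono a))"
    by (simp add: label_def)
  also have "(\<Sum>x\<in>L. label x) = (if v = u then monomial 1 (var_mono Lam) - monomial 1 (var_mono (Vv v)) else 0)"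
    unfolding L_def by (simp add: label_def monomial_neg)
  finally show ?thesis
    unfolding char_mat_def floquet_def A_def by simp
qed

definition Cfg :: "'v set \<Rightarrow> ('d::finite, 'v) etriple set \<Rightarrow> (('v \<Rightarrow> 'v) \<times> ('v \<Rightarrow> ('d, 'v) hedge)) set" where
  "Cfg W E = Sigma {p. p permutes W} (\<lambda>p. PiE W (\<lambda>v. HS W E v (p v)))"

definition Mf :: "'v set \<Rightarrow> ('v \<Rightarrow> ('d::finite, 'v) hedge) \<Rightarrow> ('d, 'v) mono" where
  "Mf W f = (\<Sum>v\<in>W. label_mono (f v))"

definition Cf :: "'v set \<Rightarrow> ('v \<Rightarrow> ('d::finite, 'v) hedge) \<Rightarrow> complex" where
  "Cf W f = (\<Prod>v\<in>W. label_coeff (f v))"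

lemma prod_single:
  assumes "finite A"
  shows "(\<Prod>i\<in>A. Poly_Mapping.single (m i) (c i)) = Poly_Mapping.single (\<Sum>i\<in>A. m i) (\<Prod>i\<in>A. (c i :: 'b::comm_semiring_1))"
  using assms by (induction A rule: finite_induct) (simp_all add: mult_single)

lemma Cfg_finite: "periodic_graph W E \<Longrightarrow> finite (Cfg W E)"
  unfolding Cfg_def
  using finite_permutations[of W] HS_finite[of W E]
  by (intro finite_SigmaI finite_PiE) (auto simp: periodic_graph_def)

lemma dispersion_expand:
  fixes E :: "('d::finite, 'v) etriple set"
  assumes pg: "periodic_graph W E"
  shows "dispersion W E = (\<Sum>c\<in>Cfg W E. Poly_Mapping.single (Mf W (snd c)) (of_int (sign (fst c)) * Cf W (snd c)))"
proof -
  have finW: "finite W" using pg by (simp add: periodic_graph_def)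
  have "dispersion W E = (\<Sum>p\<in>{p. p permutes W}. of_int (sign p) * (\<Prod>v\<in>W. \<Sum>x\<in>HS W E v (p v). label x))"
    unfolding dispersion_def det_on_def
  proof (rule sum.cong[OF refl])
    fix p assume "p \<in> {p. p permutes W}"
    then have "\<And>v. v \<in> W \<Longrightarrow> p v \<in> W" by (simp add: permutes_in_image)
    then show "of_int (sign p) * (\<Prod>v\<in>W. char_mat E v (p v)) = of_int (sign p) * (\<Prod>v\<in>W. \<Sum>x\<in>HS W E v (p v). label x)"
      using char_mat_sum[OF pg] by simp
  qed
  also have "\<dots> = (\<Sum>p\<in>{p. p permutes W}. \<Sum>f\<in>PiE W (\<lambda>v. HS W E v (p v)). of_int (sign p) * (\<Prod>v\<in>W. label (f v)))"
    by (simp add: prod_sum_PiE[OF finW HS_finite[OF pg]] sum_distrib_left)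
  also have "\<dots> = (\<Sum>c\<in>Cfg W E. of_int (sign (fst c)) * (\<Prod>v\<in>W. label (snd c v)))"
    unfolding Cfg_def
    by (subst sum.Sigma) (use finite_permutations[OF finW] finite_PiE[OF finW HS_finite[OF pg]] in \<open>auto simp: split_beta\<close>)
  also have "\<dots> = (\<Sum>c\<in>Cfg W E. Poly_Mapping.single (Mf W (snd c)) (of_int (sign (fst c)) * Cf W (snd c)))"
  proof (rule sum.cong[OF refl])
    fix c :: "('v \<Rightarrow> 'v) \<times> ('v \<Rightarrow> ('d, 'v) hedge)"
    have "(\<Prod>v\<in>W. label (snd c v)) = Poly_Mapping.single (Mf W (snd c)) (Cf W (snd c))"
      unfolding label_def monomial_def Mf_def Cf_def by (rule prod_single[OF finW])
    moreover have "(of_int k :: ('d, 'v) lpoly) * Poly_Mapping.single m z = Poly_Mapping.single m (of_int k * z)" for k m z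
      by (metis single_of_int mult_single add_0)
    ultimately show "of_int (sign (fst c)) * (\<Prod>v\<in>W. label (snd c v)) = Poly_Mapping.single (Mf W (snd c)) (of_int (sign (fst c)) * Cf W (snd c))"
      by simp
  qed
  finally show ?thesis .
qed



lemma lookup_z_mono: "Poly_Mapping.lookup (z_mono a :: ('d::finite, 'v) mono) x = (case x of Zv i \<Rightarrow> a $ i | _ \<Rightarrow> 0)"
  by (cases x) (simp_all add: z_mono_def lookup_sum lookup_single when_def)

lemma lookup_var_mono: "Poly_Mapping.lookup (var_mono y) x = (if y = x then 1 else 0)"
  by (simp add: var_mono_def lookup_single when_def)

lemma lm_V: "Poly_Mapping.lookup (label_mono x) (Vv w) = (if x = VLoop w then 1 else 0)"
  by (cases x) (auto simp: lookup_add lookup_var_mono lookup_z_mono)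

lemma lm_Lam: "Poly_Mapping.lookup (label_mono x) Lam = (if x \<in> range LamLoop then 1 else 0)"
  by (cases x) (auto simp: lookup_add lookup_var_mono lookup_z_mono)

lemma lm_Z: "Poly_Mapping.lookup (label_mono x) (Zv i) = (case x of Edge v a u \<Rightarrow> a $ i | _ \<Rightarrow> 0)"
  by (cases x) (auto simp: lookup_add lookup_var_mono lookup_z_mono)

lemma lm_E: "Poly_Mapping.lookup (label_mono x) (Ev o') =
   (if \<exists>v a u. x = Edge v a u \<and> edge_orbit (v, a, u) = o' then 1 else 0)"
  by (cases x) (auto simp: lookup_add lookup_var_mono lookup_z_mono)

lemma Cfg_D:
  assumes "(p, f) \<in> Cfg W E" "v \<in> W"
  shows "f v \<in> hat_edges W E" "head (f v) = v" "tail (f v) = p v" "p permutes W"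
  using assms unfolding Cfg_def HS_def by auto

lemma Cfg_perm: "(p, f) \<in> Cfg W E \<Longrightarrow> p permutes W"
  unfolding Cfg_def by auto

lemma Mf_V:
  assumes c: "(p, f) \<in> Cfg W E" and w: "w \<in> W" and fin: "finite W"
  shows "Poly_Mapping.lookup (Mf W f) (Vv w) = (if f w = VLoop w then 1 else 0)"
proof -
  have "Poly_Mapping.lookup (Mf W f) (Vv w) = (\<Sum>v\<in>W. if f v = VLoop w then 1 else 0)"
    by (simp add: Mf_def lookup_sum lm_V)
  also have "\<dots> = (\<Sum>v\<in>W. if v = w then (if f w = VLoop w then 1 else 0) else 0)"
  proof (rule sum.cong[OF refl])
    fix v assume v: "v \<in> W"
    show "(if f v = VLoop w then 1 else 0) = (if v = w then (if f w = VLoop w then 1 else 0) else (0::int))"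
      using Cfg_D(2)[OF c v] by auto
  qed
  also have "\<dots> = (if f w = VLoop w then 1 else 0)" using w fin by simp
  finally show ?thesis .
qed

lemma Mf_E:
  assumes fin: "finite W"
  shows "Poly_Mapping.lookup (Mf W f) (Ev o') \<noteq> 0 \<longleftrightarrow>
    (\<exists>v\<in>W. \<exists>w a u. f v = Edge w a u \<and> edge_orbit (w, a, u) = o')"
proof -
  have "Poly_Mapping.lookup (Mf W f) (Ev o') = (\<Sum>v\<in>W. if \<exists>w a u. f v = Edge w a u \<and> edge_orbit (w, a, u) = o' then 1 else 0)"
    by (simp add: Mf_def lookup_sum lm_E)
  moreover have "(\<Sum>v\<in>W. (if \<exists>w a u. f v = Edge w a u \<and> edge_orbit (w, a, u) = o' then 1 else 0) :: int) = 0 \<longleftrightarrow>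
     (\<forall>v\<in>W. \<not> (\<exists>w a u. f v = Edge w a u \<and> edge_orbit (w, a, u) = o'))"
    by (subst sum_nonneg_eq_0_iff[OF fin]) auto
  ultimately show ?thesis by auto
qed

lemma edge_orbit_eq:
  assumes "edge_orbit (v, a, u) = edge_orbit (w, b, u')"
  shows "(v = w \<and> u = u') \<or> (v = u' \<and> u = w)"
proof -
  have h: "(v, a, u) \<in> edge_orbit (v, a, u)" by (simp add: edge_orbit_def)
  have "(v, a, u) \<in> edge_orbit (w, b, u')" using h unfolding assms .
  then show ?thesis by (auto simp: edge_orbit_def)
qed

lemma Cfg_edge:
  assumes c: "(p, f) \<in> Cfg W E" and v: "v \<in> W" and pv: "p v \<noteq> v"
  shows "\<exists>a. f v = Edge v a (p v)"
  using Cfg_D[OF c v] pv by (cases "f v") auto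

lemma graph_incl:
  fixes E :: "('d::finite, 'v) etriple set"
  assumes pg: "periodic_graph W E" and c: "(p, f) \<in> Cfg W E" and c': "(p', f') \<in> Cfg W E"
    and eq: "Mf W f = Mf W f'"
  shows "\<forall>v\<in>W. \<exists>w\<in>W. {v, p' v} = {w, p w}"
proof
  fix v assume v: "v \<in> W"
  have fin: "finite W" using pg by (simp add: periodic_graph_def)
  have Veq: "f x = VLoop x \<longleftrightarrow> f' x = VLoop x" if "x \<in> W" for x
    using Mf_V[OF c that fin] Mf_V[OF c' that fin] eq by (auto split: if_splits)
  have Eeq: "(\<exists>v\<in>W. \<exists>w a u. f v = Edge w a u \<and> edge_orbit (w, a, u) = o') \<longleftrightarrow>
             (\<exists>v\<in>W. \<exists>w a u. f' v = Edge w a u \<and> edge_orbit (w, a, u) = o')" for o'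
    using Mf_E[OF fin, of f o'] Mf_E[OF fin, of f' o'] eq by simp
  note D = Cfg_D[OF c v] and D' = Cfg_D[OF c' v] and P' = Cfg_perm[OF c']
  show "\<exists>w\<in>W. {v, p' v} = {w, p w}"
  proof (cases "f' v")
    case (LamLoop x)
    then have x: "x = v" "p' v = v" using D' by auto
    have "p v = v"
    proof (rule ccontr)
      assume pv: "p v \<noteq> v"
      then obtain a where fa: "f v = Edge v a (p v)" using Cfg_edge[OF c v] by blast
      then obtain y w b u where y: "y \<in> W" "f' y = Edge w b u" "edge_orbit (w, b, u) = edge_orbit (v, a, p v)"
        using Eeq[of "edge_orbit (v, a, p v)"] v by blast
      have hy: "w = y" "u = p' y" using Cfg_D[OF c' y(1)] y(2) by auto
      from edge_orbit_eq[OF y(3)] show False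
      proof
        assume "w = v \<and> u = p v" then show False using hy LamLoop y(2) by auto
      next
        assume "w = p v \<and> u = v"
        then have "p' y = p' v" "y \<noteq> v" using hy x pv by auto
        then show False using permutes_inj[OF P'] by (simp add: inj_eq)
      qed
    qed
    then show ?thesis using v x by auto
  next
    case (VLoop x)
    then have x: "x = v" "p' v = v" using D' by auto
    then have "f v = VLoop v" using Veq[OF v] VLoop by simp
    then have "p v = v" using D by auto
    then show ?thesis using v x by auto
  next
    case (Edge x a u)
    then have x: "x = v" "u = p' v" using D' by auto
    then obtain y w b u' where y: "y \<in> W" "f y = Edge w b u'" "edge_orbit (w, b, u') = edge_orbit (v, a, p' v)"
      using Eeq[of "edge_orbit (v, a, p' v)"] v Edge by blast
    have hy: "w = y" "u' = p y" using Cfg_D[OF c y(1)] y(2) by auto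
    from edge_orbit_eq[OF y(3)] have "{v, p' v} = {y, p y}" using hy by auto
    then show ?thesis using y(1) by blast
  qed
qed

lemma Cf_eq:
  fixes E :: "('d::finite, 'v) etriple set"
  assumes pg: "periodic_graph W E" and c: "(p, f) \<in> Cfg W E" and c': "(p', f') \<in> Cfg W E"
    and eq: "Mf W f = Mf W f'"
  shows "Cf W f = Cf W f'"
proof -
  have fin: "finite W" using pg by (simp add: periodic_graph_def)
  have Veq: "f x = VLoop x \<longleftrightarrow> f' x = VLoop x" if "x \<in> W" for x
    using Mf_V[OF c that fin] Mf_V[OF c' that fin] eq by (auto split: if_splits)
  have lc: "label_coeff (g v) = (if g v = VLoop v then -1 else 1)" if "(q, g) \<in> Cfg W E" "v \<in> W" for q g v
    using Cfg_D(2)[OF that] by (cases "g v") auto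
  show ?thesis unfolding Cf_def
    by (rule prod.cong[OF refl]) (simp add: lc[OF c] lc[OF c'] Veq)
qed

lemma term_eq:
  fixes E :: "('d::finite, 'v) etriple set"
  assumes pg: "periodic_graph W E" and c: "(p, f) \<in> Cfg W E" and c': "(p', f') \<in> Cfg W E"
    and eq: "Mf W f = Mf W f'"
  shows "(of_int (sign p) * Cf W f :: complex) = of_int (sign p') * Cf W f'"
proof -
  have fin: "finite W" using pg by (simp add: periodic_graph_def)
  have "sign p = sign p'"
    using sign_graph[OF fin Cfg_perm[OF c] Cfg_perm[OF c'] graph_incl[OF pg c c' eq] graph_incl[OF pg c' c eq[symmetric]]] .
  then show ?thesis using Cf_eq[OF pg c c' eq] by simp
qed

lemma Cf_nz: "finite W \<Longrightarrow> Cf W f \<noteq> 0"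
  unfolding Cf_def
proof (subst prod_zero_iff)
  show "finite W \<Longrightarrow> finite W" .
  show "\<not> (\<exists>a\<in>W. label_coeff (f a) = 0)"
  proof
    assume "\<exists>a\<in>W. label_coeff (f a) = 0"
    then obtain a where "label_coeff (f a) = 0" by blast
    then show False by (cases "f a") auto
  qed
qed

lemma keys_dispersion:
  fixes E :: "('d::finite, 'v) etriple set"
  assumes pg: "periodic_graph W E"
  shows "Poly_Mapping.keys (dispersion W E) = (\<lambda>c. Mf W (snd c)) ` Cfg W E"
proof -
  have fin: "finite W" using pg by (simp add: periodic_graph_def)
  have finC: "finite (Cfg W E)" using Cfg_finite[OF pg] .
  have lk: "Poly_Mapping.lookup (dispersion W E) m =
     (\<Sum>c\<in>Cfg W E. if Mf W (snd c) = m then of_int (sign (fst c)) * Cf W (snd c) else 0)" for m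
    unfolding dispersion_expand[OF pg] lookup_sum lookup_single when_def by simp
  show ?thesis
  proof (rule set_eqI)
    fix m
    show "m \<in> Poly_Mapping.keys (dispersion W E) \<longleftrightarrow> m \<in> (\<lambda>c. Mf W (snd c)) ` Cfg W E"
    proof
      assume "m \<in> Poly_Mapping.keys (dispersion W E)"
      then have nz: "Poly_Mapping.lookup (dispersion W E) m \<noteq> 0" by (simp add: in_keys_iff)
      show "m \<in> (\<lambda>c. Mf W (snd c)) ` Cfg W E"
      proof (rule ccontr)
        assume "m \<notin> (\<lambda>c. Mf W (snd c)) ` Cfg W E"
        then have "\<forall>c\<in>Cfg W E. Mf W (snd c) \<noteq> m" by blast
        then have "Poly_Mapping.lookup (dispersion W E) m = 0" unfolding lk by (intro sum.neutral) simp
        then show False using nz by simp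
      qed
    next
      assume "m \<in> (\<lambda>c. Mf W (snd c)) ` Cfg W E"
      then obtain p0 f0 where c0: "(p0, f0) \<in> Cfg W E" "m = Mf W f0" by auto
      define t0 where "t0 = (of_int (sign p0) * Cf W f0 :: complex)"
      have t0nz: "t0 \<noteq> 0" unfolding t0_def using Cf_nz[OF fin] by simp
      define C0 where "C0 = {c \<in> Cfg W E. Mf W (snd c) = m}"
      have "Poly_Mapping.lookup (dispersion W E) m = (\<Sum>c\<in>C0. of_int (sign (fst c)) * Cf W (snd c))"
        unfolding lk C0_def using finC by (simp add: sum.inter_filter)
      also have "\<dots> = (\<Sum>c\<in>C0. t0)"
      proof (rule sum.cong[OF refl])
        fix c assume "c \<in> C0"
        then obtain p f where "c = (p, f)" "(p, f) \<in> Cfg W E" "Mf W f = m" unfolding C0_def by (cases c) auto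
        then show "of_int (sign (fst c)) * Cf W (snd c) = t0"
          unfolding t0_def using term_eq[OF pg _ c0(1)] c0(2) by simp
      qed
      also have "\<dots> = of_nat (card C0) * t0" by simp
      finally have "Poly_Mapping.lookup (dispersion W E) m = of_nat (card C0) * t0" .
      moreover have "card C0 \<noteq> 0"
      proof -
        have "(p0, f0) \<in> C0" using c0 unfolding C0_def by simp
        moreover have "finite C0" using finC unfolding C0_def by simp
        ultimately show ?thesis by auto
      qed
      ultimately have "Poly_Mapping.lookup (dispersion W E) m \<noteq> 0" using t0nz by simp
      then show "m \<in> Poly_Mapping.keys (dispersion W E)" by (simp add: in_keys_iff)
    qed
  qed
qed



lemma cover_of_Cfg:
  fixes E :: "('d::finite, 'v) etriple set"
  assumes pg: "periodic_graph W E" and c: "(p, f) \<in> Cfg W E"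
  shows "cycle_cover W E (f ` W)" "(\<Sum>x\<in>f ` W. label_mono x) = Mf W f"
proof -
  have P: "p permutes W" using Cfg_perm[OF c] .
  note D = Cfg_D[OF c]
  have inj: "inj_on f W" by (rule inj_onI) (metis D(2))
  show "(\<Sum>x\<in>f ` W. label_mono x) = Mf W f"
    unfolding Mf_def by (simp add: sum.reindex[OF inj])
  have tl: "\<exists>!x. x \<in> f ` W \<and> tail x = v" if v: "v \<in> W" for v
  proof -
    obtain w where w: "p w = v" using P unfolding permutes_def by blast
    have wW: "w \<in> W" using w v P by (metis permutes_not_in)
    show ?thesis
    proof (rule ex1I[of _ "f w"])
      show "f w \<in> f ` W \<and> tail (f w) = v" using wW D(3)[OF wW] w by simp
    next
      fix x assume x: "x \<in> f ` W \<and> tail x = v"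
      then obtain w' where w': "w' \<in> W" "x = f w'" by blast
      then have "p w' = p w" using D(3)[OF w'(1)] x w by simp
      then have "w' = w" using permutes_inj[OF P] by (simp add: inj_eq)
      then show "x = f w" using w' by simp
    qed
  qed
  have hd: "\<exists>!x. x \<in> f ` W \<and> head x = v" if v: "v \<in> W" for v
  proof (rule ex1I[of _ "f v"])
    show "f v \<in> f ` W \<and> head (f v) = v" using v D(2)[OF v] by simp
  next
    fix x assume x: "x \<in> f ` W \<and> head x = v"
    then obtain w' where w': "w' \<in> W" "x = f w'" by blast
    then have "w' = v" using D(2)[OF w'(1)] x by simp
    then show "x = f v" using w' by simp
  qed
  show "cycle_cover W E (f ` W)"
  proof -
    have "f ` W \<subseteq> hat_edges W E" using D(1) by blast
    then show ?thesis unfolding cycle_cover_def by (intro conjI ballI tl hd)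
  qed
qed

lemma Cfg_of_cover:
  fixes E :: "('d::finite, 'v) etriple set"
  assumes pg: "periodic_graph W E" and Z: "cycle_cover W E Z"
  shows "\<exists>p f. (p, f) \<in> Cfg W E \<and> Z = f ` W"
proof -
  have finW: "finite W" using pg by (simp add: periodic_graph_def)
  have sub: "Z \<subseteq> hat_edges W E" and T: "\<And>v. v \<in> W \<Longrightarrow> \<exists>!x. x \<in> Z \<and> tail x = v"
    and Hd: "\<And>v. v \<in> W \<Longrightarrow> \<exists>!x. x \<in> Z \<and> head x = v"
    using Z unfolding cycle_cover_def by auto
  define f where "f v = (if v \<in> W then (THE x. x \<in> Z \<and> head x = v) else undefined)" for v
  have fx: "f v \<in> Z \<and> head (f v) = v" if "v \<in> W" for v
    unfolding f_def using that theI'[OF Hd[OF that]] by simp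
  define p where "p v = (if v \<in> W then tail (f v) else v)" for v
  have pW: "p v \<in> W" if "v \<in> W" for v
    using that fx[OF that] sub hat_edges_W(2)[OF pg] unfolding p_def by auto
  have injp: "inj_on p W"
  proof (rule inj_onI)
    fix v w assume vw: "v \<in> W" "w \<in> W" "p v = p w"
    then have "tail (f v) = tail (f w)" unfolding p_def by simp
    moreover have "tail (f v) \<in> W" using pW[OF vw(1)] vw(1) unfolding p_def by simp
    ultimately have "f v = f w" using T fx vw by metis
    then show "v = w" using fx vw by metis
  qed
  have imp: "p ` W = W"
  proof -
    have s: "p ` W \<subseteq> W" using pW by blast
    have "card (p ` W) = card W" using card_image[OF injp] .
    then show ?thesis using card_subset_eq[OF finW s] by blast
  qed
  have b: "bij_betw p W W" using injp imp by (simp add: bij_betw_def)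
  have hout: "\<And>x. x \<notin> W \<Longrightarrow> p x = x" by (simp add: p_def)
  have P: "p permutes W" using bij_imp_permutes[OF b hout] .
  have fP: "f \<in> PiE W (\<lambda>v. HS W E v (p v))"
    unfolding PiE_def HS_def p_def using fx sub by (auto simp: extensional_def f_def)
  have "Z = f ` W"
  proof
    show "f ` W \<subseteq> Z" using fx by blast
    show "Z \<subseteq> f ` W"
    proof
      fix x assume x: "x \<in> Z"
      then have h: "head x \<in> W" using sub hat_edges_W(1)[OF pg] by blast
      then have "f (head x) = x" using fx[OF h] x Hd[OF h] by metis
      then show "x \<in> f ` W" using h by (metis imageI)
    qed
  qed
  then show ?thesis using P fP unfolding Cfg_def by blast
qed

lemma points_eq:
  fixes E :: "('d::finite, 'v) etriple set"
  assumes pg: "periodic_graph W E"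
  shows "zl_exp ` Poly_Mapping.keys (dispersion W E) = {wt_zl_exp Z | Z. cycle_cover W E Z}"
proof -
  have "zl_exp ` Poly_Mapping.keys (dispersion W E) = (\<lambda>c. zl_exp (Mf W (snd c))) ` Cfg W E"
    unfolding keys_dispersion[OF pg] by auto
  also have "\<dots> = {wt_zl_exp Z | Z. cycle_cover W E Z}"
  proof
    show "(\<lambda>c. zl_exp (Mf W (snd c))) ` Cfg W E \<subseteq> {wt_zl_exp Z | Z. cycle_cover W E Z}"
    proof
      fix y assume "y \<in> (\<lambda>c. zl_exp (Mf W (snd c))) ` Cfg W E"
      then obtain p f where c: "(p, f) \<in> Cfg W E" "y = zl_exp (Mf W f)" by auto
      have "y = wt_zl_exp (f ` W)" unfolding wt_zl_exp_def using c(2) cover_of_Cfg(2)[OF pg c(1)] by simp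
      then show "y \<in> {wt_zl_exp Z | Z. cycle_cover W E Z}"
        using cover_of_Cfg(1)[OF pg c(1)] by blast
    qed
    show "{wt_zl_exp Z | Z. cycle_cover W E Z} \<subseteq> (\<lambda>c. zl_exp (Mf W (snd c))) ` Cfg W E"
    proof
      fix y assume "y \<in> {wt_zl_exp Z | Z. cycle_cover W E Z}"
      then obtain Z where Z: "cycle_cover W E Z" "y = wt_zl_exp Z" by auto
      then obtain p f where c: "(p, f) \<in> Cfg W E" "Z = f ` W" using Cfg_of_cover[OF pg] by blast
      then have "y = zl_exp (Mf W f)" using Z cover_of_Cfg(2)[OF pg c(1)] unfolding wt_zl_exp_def by simp
      then show "y \<in> (\<lambda>c. zl_exp (Mf W (snd c))) ` Cfg W E" using c(1) by force
    qed
  qed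
  finally show ?thesis .
qed

lemma replace_unique:
  assumes "\<exists>!z. z \<in> Z \<and> g z = v" "x \<in> Z" "g y = g x"
  shows "\<exists>!z. z \<in> insert y (Z - {x}) \<and> g z = v"
proof -
  obtain z0 where z0: "z0 \<in> Z" "g z0 = v" "\<And>z. z \<in> Z \<Longrightarrow> g z = v \<Longrightarrow> z = z0"
    using assms(1) by blast
  show ?thesis
  proof (cases "z0 = x")
    case True
    show ?thesis
    proof (rule ex1I[of _ y])
      show "y \<in> insert y (Z - {x}) \<and> g y = v" using True z0(2) assms(3) by simp
      fix z assume z: "z \<in> insert y (Z - {x}) \<and> g z = v"
      show "z = y"
      proof (rule ccontr)
        assume "z \<noteq> y"
        then have "z \<in> Z" "z \<noteq> x" "g z = v" using z by auto
        then show False using z0(3)[of z] True by simp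
      qed
    qed
  next
    case False
    show ?thesis
    proof (rule ex1I[of _ z0])
      show "z0 \<in> insert y (Z - {x}) \<and> g z0 = v" using False z0(1,2) by simp
      fix z assume z: "z \<in> insert y (Z - {x}) \<and> g z = v"
      show "z = z0"
      proof (cases "z = y")
        case True
        then have "g x = v" using z assms by simp
        then have "x = z0" using z0(3) assms(2) by blast
        then show ?thesis using False by simp
      next
        case False
        then have "z \<in> Z" "g z = v" using z by auto
        then show ?thesis by (rule z0(3))
      qed
    qed
  qed
qed

lemma cover_replace:
  fixes E :: "('d::finite, 'v) etriple set"
  assumes pg: "periodic_graph W E" and Z: "cycle_cover W E Z" and x: "x \<in> Z"
    and y: "y \<in> hat_edges W E" "head y = head x" "tail y = tail x" "y \<noteq> x"
  shows "cycle_cover W E (insert y (Z - {x}))"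
    "(\<Sum>z\<in>insert y (Z - {x}). label_mono z) + label_mono x = (\<Sum>z\<in>Z. label_mono z) + label_mono y"
proof -
  have sub: "Z \<subseteq> hat_edges W E" and T: "\<And>v. v \<in> W \<Longrightarrow> \<exists>!x. x \<in> Z \<and> tail x = v"
    and Hd: "\<And>v. v \<in> W \<Longrightarrow> \<exists>!x. x \<in> Z \<and> head x = v"
    using Z unfolding cycle_cover_def by auto
  show "cycle_cover W E (insert y (Z - {x}))"
    unfolding cycle_cover_def using sub y T Hd replace_unique[OF _ x, of tail] replace_unique[OF _ x, of head]
    by auto
  have finZ: "finite Z" using sub hat_edges_finite[OF pg] finite_subset by blast
  have hx: "head x \<in> W" using x sub hat_edges_W(1)[OF pg] by blast
  have yZ: "y \<notin> Z" using Hd[OF hx] x y by metis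
  have "(\<Sum>z\<in>insert y (Z - {x}). label_mono z) = label_mono y + (\<Sum>z\<in>Z - {x}. label_mono z)"
    using finZ yZ by (simp add: sum.insert)
  moreover have "(\<Sum>z\<in>Z. label_mono z) = label_mono x + (\<Sum>z\<in>Z - {x}. label_mono z)"
    using finZ x by (simp add: sum.remove)
  ultimately show "(\<Sum>z\<in>insert y (Z - {x}). label_mono z) + label_mono x = (\<Sum>z\<in>Z. label_mono z) + label_mono y"
    by (simp add: algebra_simps)
qed

lemma swap_LV:
  fixes E :: "('d::finite, 'v) etriple set"
  assumes pg: "periodic_graph W E" and Z: "cycle_cover W E Z" and x: "LamLoop v \<in> Z"
  shows "cycle_cover W E (insert (VLoop v) (Z - {LamLoop v}))"
    "wt_zl_exp (insert (VLoop v) (Z - {LamLoop v})) = (fst (wt_zl_exp Z), snd (wt_zl_exp Z) - 1)"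
proof -
  have sub: "Z \<subseteq> hat_edges W E" using Z unfolding cycle_cover_def by auto
  have v: "v \<in> W" using sub x hat_edges_W(1)[OF pg] by fastforce
  have y: "VLoop v \<in> hat_edges W E" using v unfolding hat_edges_def by auto
  note R = cover_replace[OF pg Z x y] 
  show "cycle_cover W E (insert (VLoop v) (Z - {LamLoop v}))" using R(1) by simp
  have e: "Poly_Mapping.lookup (\<Sum>z\<in>insert (VLoop v) (Z - {LamLoop v}). label_mono z) k + Poly_Mapping.lookup (var_mono Lam) k
      = Poly_Mapping.lookup (\<Sum>z\<in>Z. label_mono z) k + Poly_Mapping.lookup (var_mono (Vv v)) k" for k
    using arg_cong[OF R(2), of "\<lambda>m. Poly_Mapping.lookup m k"] by (simp add: lookup_add)
  show "wt_zl_exp (insert (VLoop v) (Z - {LamLoop v})) = (fst (wt_zl_exp Z), snd (wt_zl_exp Z) - 1)"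
    unfolding wt_zl_exp_def zl_exp_def using e[of "Zv _"] e[of Lam] by (simp add: lookup_var_mono)
qed

lemma swap_VL:
  fixes E :: "('d::finite, 'v) etriple set"
  assumes pg: "periodic_graph W E" and Z: "cycle_cover W E Z" and x: "VLoop v \<in> Z"
  shows "cycle_cover W E (insert (LamLoop v) (Z - {VLoop v}))"
    "wt_zl_exp (insert (LamLoop v) (Z - {VLoop v})) = (fst (wt_zl_exp Z), snd (wt_zl_exp Z) + 1)"
proof -
  have sub: "Z \<subseteq> hat_edges W E" using Z unfolding cycle_cover_def by auto
  have v: "v \<in> W" using sub x hat_edges_W(1)[OF pg] by fastforce
  have y: "LamLoop v \<in> hat_edges W E" using v unfolding hat_edges_def by auto
  note R = cover_replace[OF pg Z x y] 
  show "cycle_cover W E (insert (LamLoop v) (Z - {VLoop v}))" using R(1) by simp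
  have e: "Poly_Mapping.lookup (\<Sum>z\<in>insert (LamLoop v) (Z - {VLoop v}). label_mono z) k + Poly_Mapping.lookup (var_mono (Vv v)) k
      = Poly_Mapping.lookup (\<Sum>z\<in>Z. label_mono z) k + Poly_Mapping.lookup (var_mono Lam) k" for k
    using arg_cong[OF R(2), of "\<lambda>m. Poly_Mapping.lookup m k"] by (simp add: lookup_add)
  show "wt_zl_exp (insert (LamLoop v) (Z - {VLoop v})) = (fst (wt_zl_exp Z), snd (wt_zl_exp Z) + 1)"
    unfolding wt_zl_exp_def zl_exp_def using e[of "Zv _"] e[of Lam] by (simp add: lookup_var_mono)
qed

lemma lam_count:
  fixes E :: "('d::finite, 'v) etriple set"
  assumes pg: "periodic_graph W E" and Z: "cycle_cover W E Z"
  shows "snd (wt_zl_exp Z) \<ge> 0" "snd (wt_zl_exp Z) > 0 \<Longrightarrow> \<exists>v\<in>W. LamLoop v \<in> Z"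
proof -
  have sub: "Z \<subseteq> hat_edges W E" using Z unfolding cycle_cover_def by auto
  have eq: "snd (wt_zl_exp Z) = (\<Sum>x\<in>Z. if x \<in> range LamLoop then 1 else 0)"
    unfolding wt_zl_exp_def zl_exp_def by (simp add: lookup_sum lm_Lam)
  show "snd (wt_zl_exp Z) \<ge> 0" unfolding eq by (rule sum_nonneg) simp
  assume "snd (wt_zl_exp Z) > 0"
  then obtain x where "x \<in> Z" "x \<in> range LamLoop" unfolding eq
    by (metis (mono_tags, lifting) less_irrefl sum.neutral)
  then obtain v where "LamLoop v \<in> Z" by auto
  moreover then have "v \<in> W" using sub hat_edges_W(1)[OF pg] by fastforce
  ultimately show "\<exists>v\<in>W. LamLoop v \<in> Z" by blast
qed



lemma inner_to_real: "inner (to_real eta) (to_real x) = real_of_int (int_dot eta x)"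
  unfolding to_real_def int_dot_def by (simp add: inner_vec_def)

lemma int_dot_minus1: "int_dot eta (a, k - 1) = int_dot eta (a, k) - snd eta"
  unfolding int_dot_def by (simp add: algebra_simps)

lemma int_dot_plus1: "int_dot eta (a, k + 1) = int_dot eta (a, k) + snd eta"
  unfolding int_dot_def by (simp add: algebra_simps)

lemma to_real_shift: "to_real (a, k - 1) + (0, 1) = to_real (a, k)"
  unfolding to_real_def by simp

lemma newton_eq:
  fixes E :: "('d::finite, 'v) etriple set"
  assumes pg: "periodic_graph W E"
  shows "newton_polytope (dispersion W E) = convex hull (to_real ` {wt_zl_exp Z | Z. cycle_cover W E Z})"
  unfolding newton_polytope_def points_eq[OF pg, symmetric] image_image ..

lemma S_finite:
  fixes E :: "('d::finite, 'v) etriple set"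
  assumes pg: "periodic_graph W E"
  shows "finite {wt_zl_exp Z | Z. cycle_cover W E Z}"
proof -
  have "{wt_zl_exp Z | Z. cycle_cover W E Z} \<subseteq> wt_zl_exp ` Pow (hat_edges W E)"
    unfolding cycle_cover_def by auto
  then show ?thesis using hat_edges_finite[OF pg] finite_subset by blast
qed

lemma lower_bound:
  fixes E :: "('d::finite, 'v) etriple set"
  assumes pg: "periodic_graph W E" and Z0: "\<forall>Z'. cycle_cover W E Z' \<longrightarrow> eta_val eta Z0 \<le> eta_val eta Z'"
    and y: "y \<in> newton_polytope (dispersion W E)"
  shows "inner (to_real eta) (to_real (wt_zl_exp Z0)) \<le> inner (to_real eta) y"
proof -
  define c where "c = inner (to_real eta) (to_real (wt_zl_exp Z0))"
  have "to_real ` {wt_zl_exp Z | Z. cycle_cover W E Z} \<subseteq> {x. inner (to_real eta) x \<ge> c}"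
  proof
    fix x assume "x \<in> to_real ` {wt_zl_exp Z | Z. cycle_cover W E Z}"
    then obtain Z where "cycle_cover W E Z" "x = to_real (wt_zl_exp Z)" by auto
    then show "x \<in> {x. inner (to_real eta) x \<ge> c}"
      using Z0 unfolding c_def eta_val_def by (simp add: inner_to_real)
  qed
  then have "newton_polytope (dispersion W E) \<subseteq> {x. inner (to_real eta) x \<ge> c}"
    unfolding newton_eq[OF pg] by (rule hull_minimal) (rule convex_halfspace_ge)
  then show ?thesis using y unfolding c_def by blast
qed

lemma snd_nonneg:
  fixes E :: "('d::finite, 'v) etriple set"
  assumes pg: "periodic_graph W E" and y: "y \<in> newton_polytope (dispersion W E)"
  shows "snd y \<ge> 0"
proof -
  define a where "a = ((0 :: real ^ 'd), (1::real))"
  have ia: "inner a x = snd x" for x :: "(real ^ 'd) \<times> real" unfolding a_def by (cases x) simp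
  have "to_real ` {wt_zl_exp Z | Z. cycle_cover W E Z} \<subseteq> {x. inner a x \<ge> 0}"
  proof
    fix x assume "x \<in> to_real ` {wt_zl_exp Z | Z. cycle_cover W E Z}"
    then obtain Z where "cycle_cover W E Z" "x = to_real (wt_zl_exp Z)" by auto
    then show "x \<in> {x. inner a x \<ge> 0}"
      using lam_count(1)[OF pg] unfolding ia to_real_def by simp
  qed
  then have "newton_polytope (dispersion W E) \<subseteq> {x. inner a x \<ge> 0}"
    unfolding newton_eq[OF pg] by (rule hull_minimal) (rule convex_halfspace_ge)
  then have "0 \<le> inner a y" using y by blast
  then show ?thesis using ia by simp
qed



lemma backward:
  fixes W :: "'v set" and E :: "('d::finite, 'v) etriple set" and eta :: "(int ^ 'd) \<times> int"
  assumes pg: "periodic_graph W E"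
    and v: "LamLoop v \<in> initial_graph W E eta" "VLoop v \<in> initial_graph W E eta"
  shows "exposes_vertical_face eta (newton_polytope (dispersion W E))"
proof -
  obtain Z1 where Z1: "cycle_cover W E Z1" "LamLoop v \<in> Z1"
    "\<forall>Z'. cycle_cover W E Z' \<longrightarrow> eta_val eta Z1 \<le> eta_val eta Z'"
    using v(1) unfolding initial_graph_def by blast
  obtain Z2 where Z2: "cycle_cover W E Z2" "VLoop v \<in> Z2"
    "\<forall>Z'. cycle_cover W E Z' \<longrightarrow> eta_val eta Z2 \<le> eta_val eta Z'"
    using v(2) unfolding initial_graph_def by blast
  define Z1' where "Z1' = insert (VLoop v) (Z1 - {LamLoop v})"
  define Z2' where "Z2' = insert (LamLoop v) (Z2 - {VLoop v})"
  note S1 = swap_LV[OF pg Z1(1,2), folded Z1'_def]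
  note S2 = swap_VL[OF pg Z2(1,2), folded Z2'_def]
  have e1: "eta_val eta Z1' = eta_val eta Z1 - snd eta"
    unfolding eta_val_def S1(2) using int_dot_minus1[of eta "fst (wt_zl_exp Z1)" "snd (wt_zl_exp Z1)"] by simp
  have e2: "eta_val eta Z2' = eta_val eta Z2 + snd eta"
    unfolding eta_val_def S2(2) using int_dot_plus1[of eta "fst (wt_zl_exp Z2)" "snd (wt_zl_exp Z2)"] by simp
  have "snd eta \<le> 0" using Z1(3) S1(1) e1 by force
  moreover have "snd eta \<ge> 0" using Z2(3) S2(1) e2 by force
  ultimately have s0: "snd eta = 0" by simp
  have min1': "\<forall>Z'. cycle_cover W E Z' \<longrightarrow> eta_val eta Z1' \<le> eta_val eta Z'"
    using Z1(3) e1 s0 by simp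
  define N where "N = newton_polytope (dispersion W E)"
  define x0 where "x0 = to_real (wt_zl_exp Z1')"
  have x1: "x0 + (0, 1) = to_real (wt_zl_exp Z1)"
    unfolding x0_def S1(2) using to_real_shift[of "fst (wt_zl_exp Z1)" "snd (wt_zl_exp Z1)"] by simp
  have inN: "to_real (wt_zl_exp Z) \<in> N" if "cycle_cover W E Z" for Z
    unfolding N_def newton_eq[OF pg] using that by (intro hull_inc) blast
  have "x0 \<in> exposed_face eta N"
    unfolding exposed_face_def using inN[OF S1(1)] lower_bound[OF pg min1'] unfolding x0_def N_def by blast
  moreover have "x0 + (0, 1) \<in> exposed_face eta N"
    unfolding exposed_face_def x1 using inN[OF Z1(1)] lower_bound[OF pg Z1(3)] unfolding N_def by blast
  ultimately show ?thesis
    unfolding exposes_vertical_face_def vertical_def N_def by (intro exI[of _ x0] exI[of _ 1]) simp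
qed

lemma forward:
  fixes W :: "'v set" and E :: "('d::finite, 'v) etriple set" and eta :: "(int ^ 'd) \<times> int"
  assumes pg: "periodic_graph W E"
    and ev: "exposes_vertical_face eta (newton_polytope (dispersion W E))"
  shows "snd eta = 0 \<and> (\<exists>v\<in>W. LamLoop v \<in> initial_graph W E eta \<and> VLoop v \<in> initial_graph W E eta)"
proof -
  define N where "N = newton_polytope (dispersion W E)"
  define F where "F = exposed_face eta N"
  define e where "e = to_real eta"
  define S where "S = {wt_zl_exp Z | Z. cycle_cover W E Z}"
  define P where "P = to_real ` S"
  have NP: "N = convex hull P" unfolding N_def P_def S_def newton_eq[OF pg] ..
  have finP: "finite P" unfolding P_def S_def using S_finite[OF pg] by simp
  obtain x t where xt: "t \<noteq> 0" "x \<in> F" "x + (0, t) \<in> F"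
    using ev unfolding exposes_vertical_face_def vertical_def F_def N_def by blast
  have Fmin: "y \<in> F \<Longrightarrow> z \<in> N \<Longrightarrow> inner e y \<le> inner e z" for y z
    unfolding F_def exposed_face_def e_def by blast
  have FN: "y \<in> F \<Longrightarrow> y \<in> N" for y unfolding F_def exposed_face_def by blast
  have "inner e x \<le> inner e (x + (0, t))" "inner e (x + (0, t)) \<le> inner e x"
    using Fmin[OF xt(2) FN[OF xt(3)]] Fmin[OF xt(3) FN[OF xt(2)]] by auto
  then have "inner e (0, t) = 0" by (simp add: inner_add_right)
  then have "real_of_int (snd eta) * t = 0" unfolding e_def to_real_def by simp
  then have s0: "snd eta = 0" using xt(1) by simp
  have sx: "snd x \<ge> 0" "snd x + t \<ge> 0"
    using snd_nonneg[OF pg, folded N_def, OF FN[OF xt(2)]] snd_nonneg[OF pg, folded N_def, OF FN[OF xt(3)]] by auto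
  obtain y where y: "y \<in> F" "snd y > 0"
  proof (cases "snd x > 0")
    case True then show ?thesis using that xt(2) by blast
  next
    case False
    then have "t > 0" using sx xt(1) by linarith
    then show ?thesis using that[of "x + (0, t)"] xt(3) sx by simp
  qed
  have "y \<in> convex hull P" using FN[OF y(1)] NP by simp
  then obtain u where u: "\<forall>p\<in>P. 0 \<le> u p" "sum u P = 1" "(\<Sum>p\<in>P. u p *\<^sub>R p) = y"
    unfolding convex_hull_finite[OF finP] by blast
  have PN: "p \<in> P \<Longrightarrow> p \<in> N" for p unfolding NP by (rule hull_inc)
  have ge: "p \<in> P \<Longrightarrow> inner e p - inner e y \<ge> 0" for p using Fmin[OF y(1) PN] by simp
  have "inner e y = (\<Sum>p\<in>P. u p * inner e p)"
    unfolding u(3)[symmetric] by (simp add: inner_sum_right)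
  moreover have "inner e y = (\<Sum>p\<in>P. u p * inner e y)"
    using u(2) by (simp add: sum_distrib_right[symmetric])
  ultimately have sum0: "(\<Sum>p\<in>P. u p * (inner e p - inner e y)) = 0"
    by (simp add: right_diff_distrib sum_subtractf)
  have nn: "\<And>p. p \<in> P \<Longrightarrow> 0 \<le> u p * (inner e p - inner e y)"
    using u(1) ge by simp
  have zero: "\<forall>p\<in>P. u p * (inner e p - inner e y) = 0"
    using sum_nonneg_eq_0_iff[OF finP nn] sum0 by simp
  have "snd y = (\<Sum>p\<in>P. u p * snd p)"
    unfolding u(3)[symmetric] by (simp add: snd_sum)
  then obtain p where p: "p \<in> P" "u p * snd p \<noteq> 0"
    using y(2) by (metis (mono_tags, lifting) less_irrefl sum.neutral)
  then have pe: "inner e p = inner e y" using zero by auto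
  obtain Z where Z: "cycle_cover W E Z" "p = to_real (wt_zl_exp Z)" using p(1) unfolding P_def S_def by auto
  have "snd p \<noteq> 0" using p(2) by auto
  then have "snd (wt_zl_exp Z) \<noteq> 0" using Z(2) unfolding to_real_def by auto
  then have "snd (wt_zl_exp Z) > 0" using lam_count(1)[OF pg Z(1)] by simp
  then obtain v where v: "v \<in> W" "LamLoop v \<in> Z" using lam_count(2)[OF pg Z(1)] by blast
  have minZ: "\<forall>Z'. cycle_cover W E Z' \<longrightarrow> eta_val eta Z \<le> eta_val eta Z'"
  proof (intro allI impI)
    fix Z' assume Z': "cycle_cover W E Z'"
    have "to_real (wt_zl_exp Z') \<in> N" unfolding NP P_def S_def using Z' by (intro hull_inc) blast
    then have "inner e y \<le> inner e (to_real (wt_zl_exp Z'))" using Fmin[OF y(1)] by blast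
    then have "real_of_int (eta_val eta Z) \<le> real_of_int (eta_val eta Z')"
      using pe Z(2) unfolding e_def eta_val_def by (simp add: inner_to_real)
    then show "eta_val eta Z \<le> eta_val eta Z'" by simp
  qed
  define Z' where "Z' = insert (VLoop v) (Z - {LamLoop v})"
  note S1 = swap_LV[OF pg Z(1) v(2), folded Z'_def]
  have "eta_val eta Z' = eta_val eta Z - snd eta"
    unfolding eta_val_def S1(2) using int_dot_minus1[of eta "fst (wt_zl_exp Z)" "snd (wt_zl_exp Z)"] by simp
  then have minZ': "\<forall>Z''. cycle_cover W E Z'' \<longrightarrow> eta_val eta Z' \<le> eta_val eta Z''"
    using minZ s0 by simp
  have sub: "Z \<subseteq> hat_edges W E" using Z(1) unfolding cycle_cover_def by auto
  have "LamLoop v \<in> initial_graph W E eta"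
    unfolding initial_graph_def using v(2) sub Z(1) minZ by blast
  moreover have "VLoop v \<in> initial_graph W E eta"
  proof -
    have "VLoop v \<in> hat_edges W E" using v(1) unfolding hat_edges_def by auto
    moreover have "VLoop v \<in> Z'" unfolding Z'_def by simp
    ultimately show ?thesis unfolding initial_graph_def using S1(1) minZ' by blast
  qed
  ultimately show ?thesis using s0 v(1) by blast
qed

theorem theorem2p16:
  fixes W :: "'v set" and E :: "('d::finite, 'v) etriple set" and eta :: "(int ^ 'd) \<times> int"
  assumes "periodic_graph W E"
  shows "(exposes_vertical_face eta (newton_polytope (dispersion W E)) \<longleftrightarrow>
            (\<exists>v\<in>W. LamLoop v \<in> initial_graph W E eta \<and> VLoop v \<in> initial_graph W E eta))
         \<and> (exposes_vertical_face eta (newton_polytope (dispersion W E)) \<longrightarrow> snd eta = 0)"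
  using forward[OF assms] backward[OF assms] by blast

end
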